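(* Let $1<\rho<2$ be real and $Z[\rho]=\{\pm z: z=\sum_{k=0}^n z_k\rho^k,\ n\ge0,\ z_k\in\{0,1\}\}$. If $\lambda>0$ and $\lambda\mathbb{Z}\subset Z[\rho]$, then $\lambda$ and $\rho$ are of the same type (both algebraic or both transcendental). If $\rho$ is algebraic, then $\rho$ and $\lambda$ both lie in the number field $\mathbb{Q}(\rho)$ and are algebraic integers. *)

theory Defs
  imports "HOL-Computational_Algebra.Polynomial" Complex_Main
begin

definition Zrho :: "real \<Rightarrow> real set" where
  "Zrho \<rho> = {x. \<exists>(n::nat) (zs::nat \<Rightarrow> real). (\<forall>k. zs k \<in> {0,1}) \<and>
      (x = (\<Sum>k=0..n. zs k * \<rho> ^ k) \<or> x = - (\<Sum>k=0..n. zs k * \<rho> ^ k))}"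

definition subfield_real :: "real set \<Rightarrow> bool" where
  "subfield_real K \<longleftrightarrow> 0 \<in> K \<and> 1 \<in> K \<and>
     (\<forall>x\<in>K. \<forall>y\<in>K. x + y \<in> K \<and> x * y \<in> K) \<and>
     (\<forall>x\<in>K. - x \<in> K) \<and> (\<forall>x\<in>K. x \<noteq> 0 \<longrightarrow> inverse x \<in> K)"

definition rat_adjoin :: "real \<Rightarrow> real set" where
  "rat_adjoin \<rho> = \<Inter>{K. subfield_real K \<and> \<rho> \<in> K}"

end

theory Submission imports Defs "Jordan_Normal_Form.Char_Poly" begin

definition Tset :: "nat \<Rightarrow> real vec \<Rightarrow> real set" where
  "Tset d v = {x. \<exists>A \<in> carrier_mat d d. map_mat real_of_int A *\<^sub>v v = x \<cdot>\<^sub>v v}"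

lemma Tset_alg_int:
  assumes "x \<in> Tset n v" "v \<in> carrier_vec n" "v \<noteq> 0\<^sub>v n"
  shows "algebraic_int x"
proof -
  from assms obtain A where A: "A \<in> carrier_mat n n" "map_mat real_of_int A *\<^sub>v v = x \<cdot>\<^sub>v v"
    unfolding Tset_def by auto
  have A': "map_mat real_of_int A \<in> carrier_mat n n" using A by auto
  have "eigenvalue (map_mat real_of_int A) x" unfolding eigenvalue_def eigenvector_def
    using assms A by auto
  hence "poly (char_poly (map_mat real_of_int A)) x = 0"
    using eigenvalue_root_char_poly[OF A'] by simp
  hence "poly (map_poly of_int (char_poly A)) x = 0"
    using of_int_hom.char_poly_hom[OF A(1)] by metis
  moreover have "lead_coeff (char_poly A) = 1" using degree_monic_char_poly[OF A(1)] by simp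
  ultimately show ?thesis unfolding algebraic_int_altdef_ipoly by blast
qed

lemma Tset_plus:
  assumes "x \<in> Tset n v" "y \<in> Tset n v" "v \<in> carrier_vec n"
  shows "x + y \<in> Tset n v"
proof -
  from assms obtain A where A: "A \<in> carrier_mat n n" "map_mat real_of_int A *\<^sub>v v = x \<cdot>\<^sub>v v"
    unfolding Tset_def by auto
  from assms obtain B where B: "B \<in> carrier_mat n n" "map_mat real_of_int B *\<^sub>v v = y \<cdot>\<^sub>v v"
    unfolding Tset_def by auto
  have e: "map_mat real_of_int (A + B) = map_mat real_of_int A + map_mat real_of_int B"
    using A B by (intro eq_matI) auto
  have "map_mat real_of_int (A + B) *\<^sub>v v = x \<cdot>\<^sub>v v + y \<cdot>\<^sub>v v"
    unfolding e using A B assms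
    by (subst add_mult_distrib_mat_vec[of _ n n]) auto
  also have "\<dots> = (x + y) \<cdot>\<^sub>v v" by (simp add: add_smult_distrib_vec)
  finally show ?thesis unfolding Tset_def using A B by auto
qed

lemma Tset_times:
  assumes "x \<in> Tset n v" "y \<in> Tset n v" "v \<in> carrier_vec n"
  shows "x * y \<in> Tset n v"
proof -
  from assms obtain A where A: "A \<in> carrier_mat n n" "map_mat real_of_int A *\<^sub>v v = x \<cdot>\<^sub>v v"
    unfolding Tset_def by auto
  from assms obtain B where B: "B \<in> carrier_mat n n" "map_mat real_of_int B *\<^sub>v v = y \<cdot>\<^sub>v v"
    unfolding Tset_def by auto
  have e: "map_mat real_of_int (A * B) = map_mat real_of_int A * map_mat real_of_int B"
    using of_int_hom.mat_hom_mult[OF A(1) B(1)] .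
  have "map_mat real_of_int (A * B) *\<^sub>v v = map_mat real_of_int A *\<^sub>v (y \<cdot>\<^sub>v v)"
    unfolding e using A B assms
    by (subst assoc_mult_mat_vec[of _ n n _ n]) auto
  also have "\<dots> = y \<cdot>\<^sub>v (x \<cdot>\<^sub>v v)" using A assms by (simp add: mult_mat_vec[of _ n n])
  also have "\<dots> = (x * y) \<cdot>\<^sub>v v" by (simp add: smult_smult_assoc mult.commute)
  finally show ?thesis unfolding Tset_def using A B by (auto intro!: bexI[of _ "A * B"])
qed

lemma Tset_one: "v \<in> carrier_vec n \<Longrightarrow> 1 \<in> Tset n v"
  unfolding Tset_def by (intro CollectI bexI[of _ "1\<^sub>m n"]) (auto simp: of_int_hom.mat_hom_one)

lemma Tset_zero: assumes "v \<in> carrier_vec n" shows "0 \<in> Tset n v"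
proof -
  have e: "map_mat real_of_int (0\<^sub>m n n) = 0\<^sub>m n n" by (rule eq_matI) auto
  have "map_mat real_of_int (0\<^sub>m n n) *\<^sub>v v = 0 \<cdot>\<^sub>v v" unfolding e using assms
    by (intro eq_vecI) (auto simp: scalar_prod_def)
  thus ?thesis unfolding Tset_def by (intro CollectI bexI[of _ "0\<^sub>m n n"]) auto
qed

lemma Tset_companion:
  fixes a :: "nat \<Rightarrow> int" and \<rho> :: real
  assumes "d \<ge> 1" "\<rho>^d = (\<Sum>i<d. of_int (a i) * \<rho>^i)"
  shows "\<rho> \<in> Tset d (vec d (\<lambda>i. \<rho>^i))"
proof -
  define A where "A = mat d d (\<lambda>(i,j). if i = d - 1 then a j else if j = i+1 then 1 else (0::int))"
  have A: "A \<in> carrier_mat d d" unfolding A_def by auto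
  have "map_mat real_of_int A *\<^sub>v vec d (\<lambda>i. \<rho>^i) = \<rho> \<cdot>\<^sub>v vec d (\<lambda>i. \<rho>^i)"
  proof (rule eq_vecI)
    fix i assume "i < dim_vec (\<rho> \<cdot>\<^sub>v vec d (\<lambda>i. \<rho>^i))"
    hence i: "i < d" by simp
    have "(map_mat real_of_int A *\<^sub>v vec d (\<lambda>i. \<rho>^i)) $ i
       = (\<Sum>j\<in>{0..<d}. real_of_int (A $$ (i,j)) * \<rho>^j)"
      using i A by (simp add: scalar_prod_def)
    also have "\<dots> = \<rho> * \<rho>^i"
    proof (cases "i = d - 1")
      case True
      have "(\<Sum>j\<in>{0..<d}. real_of_int (A $$ (i,j)) * \<rho>^j) = (\<Sum>j<d. of_int (a j) * \<rho>^j)"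
        using True by (intro sum.cong) (auto simp: A_def)
      also have "\<dots> = \<rho>^d" using assms by simp
      also have "d = Suc i" using True assms(1) by simp
      hence "\<rho>^d = \<rho> * \<rho>^i" by simp
      finally show ?thesis .
    next
      case False
      have "(\<Sum>j\<in>{0..<d}. real_of_int (A $$ (i,j)) * \<rho>^j) = (\<Sum>j\<in>{0..<d}. if j = i+1 then \<rho>^j else 0)"
        using False i by (intro sum.cong) (auto simp: A_def)
      also have "\<dots> = \<rho>^(i+1)" using False i by (simp add: sum.delta)
      finally show ?thesis by simp
    qed
    finally show "(map_mat real_of_int A *\<^sub>v vec d (\<lambda>i. \<rho>^i)) $ i = (\<rho> \<cdot>\<^sub>v vec d (\<lambda>i. \<rho>^i)) $ i"
      using i by simp
  qed (use A in auto)
  thus ?thesis unfolding Tset_def using A by blast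
qed

lemma closed_sum:
  fixes S :: "real set"
  assumes "0 \<in> S" "1 \<in> S" "\<forall>x\<in>S. \<forall>y\<in>S. x+y \<in> S \<and> x*y \<in> S" "\<rho> \<in> S" "\<forall>k. zs k \<in> {0,1}"
  shows "(\<Sum>k=0..n. zs k * \<rho>^k) \<in> S"
proof -
  have p: "\<rho>^k \<in> S" for k by (induction k) (use assms in auto)
  have t: "zs k * \<rho>^k \<in> S" for k using assms(1,5) p[of k] by (cases "zs k = 0") auto
  show ?thesis
  proof (induction n)
    case 0 thus ?case using t[of 0] by simp
  next
    case (Suc n) thus ?case using t[of "Suc n"] assms(3) by simp
  qed
qed

theorem mainTheorem13:
  fixes \<rho> lam :: real
  assumes "1 < \<rho>" and "\<rho> < 2"
    and "lam > 0"
    and "(%m. lam * m) ` \<int> \<subseteq> Zrho \<rho>"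
  shows "(algebraic lam \<longleftrightarrow> algebraic \<rho>) \<and>
         (algebraic \<rho> \<longrightarrow> \<rho> \<in> rat_adjoin \<rho> \<and> lam \<in> rat_adjoin \<rho> \<and>
             algebraic_int \<rho> \<and> algebraic_int lam)"
proof -
  have inZ: "lam * real m \<in> Zrho \<rho>" for m :: nat
    using assms(4) by (metis Ints_of_nat image_subset_iff)
  have pos: "0 \<le> (\<Sum>k=0..n. zs k * \<rho>^k)" if "\<forall>k. zs k \<in> {0,1}" for n and zs :: "nat \<Rightarrow> real"
  proof (rule sum_nonneg)
    fix k have "zs k \<ge> 0" using that[rule_format, of k] by auto
    thus "0 \<le> zs k * \<rho>^k" using assms(1) by simp
  qed
  from inZ[of 1] obtain n0 and zs0 :: "nat \<Rightarrow> real" where z0: "\<forall>k. zs0 k \<in> {0,1}"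
    and "lam = (\<Sum>k=0..n0. zs0 k * \<rho>^k) \<or> lam = - (\<Sum>k=0..n0. zs0 k * \<rho>^k)"
    unfolding Zrho_def by auto
  with pos[OF z0, of n0] assms(3) have lam: "lam = (\<Sum>k=0..n0. zs0 k * \<rho>^k)" by auto
  define B where "B = (\<Sum>k=0..n0. \<rho>^k)"
  obtain m :: nat where m: "B < real m * lam" using reals_Archimedean3[OF assms(3)] by blast
  from inZ[of m] obtain n and zs :: "nat \<Rightarrow> real" where z: "\<forall>k. zs k \<in> {0,1}"
    and "lam * m = (\<Sum>k=0..n. zs k * \<rho>^k) \<or> lam * m = - (\<Sum>k=0..n. zs k * \<rho>^k)"
    unfolding Zrho_def by auto
  moreover have "B \<ge> 0" unfolding B_def using assms(1) by (intro sum_nonneg) auto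
  ultimately have Sm: "lam * m = (\<Sum>k=0..n. zs k * \<rho>^k)" using pos[OF z, of n] m by (auto simp: mult.commute)
  have "\<exists>k. n0 < k \<and> k \<le> n \<and> zs k = 1"
  proof (rule ccontr)
    assume H: "\<not> ?thesis"
    have "(\<Sum>k=0..n. zs k * \<rho>^k) \<le> (\<Sum>k=0..n. if k \<le> n0 then \<rho>^k else 0)"
    proof (rule sum_mono)
      fix k assume k: "k \<in> {0..n}"
      show "zs k * \<rho>^k \<le> (if k \<le> n0 then \<rho>^k else 0)"
        using H k z[rule_format, of k] assms(1) by (cases "k \<le> n0") auto
    qed
    also have "\<dots> = (\<Sum>k\<in>{0..n} \<inter> {k. k \<le> n0}. \<rho>^k)"
      by (simp add: sum.inter_restrict)
    also have "\<dots> \<le> B" unfolding B_def using assms(1) by (intro sum_mono2) auto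
    finally show False using Sm m by (simp add: mult.commute)
  qed
  then obtain k0 where k0: "n0 < k0" "k0 \<le> n" "zs k0 = 1" by blast
  define j where "j = (GREATEST k. k \<le> n \<and> zs k = 1)"
  have bnd: "\<forall>y. y \<le> n \<and> zs y = 1 \<longrightarrow> y \<le> n" by blast
  have j: "j \<le> n" "zs j = 1" using GreatestI_nat[of "\<lambda>k. k \<le> n \<and> zs k = 1" k0 n] k0
    unfolding j_def by auto
  have jmax: "k \<le> j" if "k \<le> n" "zs k = 1" for k
    using Greatest_le_nat[of "\<lambda>k. k \<le> n \<and> zs k = 1" k n] that unfolding j_def by auto
  have n0j: "n0 < j" using jmax[OF k0(2,3)] k0(1) by simp
  have "(\<Sum>k=0..n. zs k * \<rho>^k) = (\<Sum>k=0..j. zs k * \<rho>^k)"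
  proof (rule sum.mono_neutral_right)
    show "\<forall>i\<in>{0..n} - {0..j}. zs i * \<rho> ^ i = 0"
    proof
      fix i assume "i \<in> {0..n} - {0..j}"
      hence "i \<le> n" "\<not> i \<le> j" by auto
      hence "zs i \<noteq> 1" using jmax by blast
      thus "zs i * \<rho> ^ i = 0" using z by auto
    qed
  qed (use j in auto)
  also have "\<dots> = (\<Sum>k<j. zs k * \<rho>^k) + \<rho>^j"
    using j(2) by (simp add: atLeast0AtMost lessThan_Suc_atMost[symmetric])
  finally have e1: "\<rho>^j = real m * (\<Sum>k=0..n0. zs0 k * \<rho>^k) - (\<Sum>k<j. zs k * \<rho>^k)"
    using Sm lam by (simp add: mult.commute)
  define c :: "(nat \<Rightarrow> real) \<Rightarrow> nat \<Rightarrow> int" where "c = (\<lambda>f k. if f k = 1 then 1 else 0)"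
  have c: "real_of_int (c f k) = f k" if "\<forall>k. f k \<in> {0,1}" for f k
    using that[rule_format, of k] unfolding c_def by auto
  define a where "a = (\<lambda>i. int m * (if i \<le> n0 then c zs0 i else 0) - c zs i)"
  have "(\<Sum>i<j. of_int (a i) * \<rho>^i) = real m * (\<Sum>i<j. (if i \<le> n0 then zs0 i * \<rho>^i else 0)) - (\<Sum>k<j. zs k * \<rho>^k)"
  proof -
    have pt: "of_int (a i) * \<rho>^i = real m * (if i \<le> n0 then zs0 i * \<rho>^i else 0) - zs k * \<rho>^k" if "k = i" for i k
      unfolding a_def using c[OF z, of i] c[OF z0, of i] that by (cases "i \<le> n0") (auto simp: algebra_simps)
    have "(\<Sum>i<j. of_int (a i) * \<rho>^i) = (\<Sum>i<j. real m * (if i \<le> n0 then zs0 i * \<rho>^i else 0) - zs i * \<rho>^i)"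
      using pt by (intro sum.cong) auto
    thus ?thesis by (simp add: sum_subtractf sum_distrib_left)
  qed
  also have "(\<Sum>i<j. (if i \<le> n0 then zs0 i * \<rho>^i else 0)) = (\<Sum>i\<in>{..<j} \<inter> {i. i \<le> n0}. zs0 i * \<rho>^i)"
    by (simp add: sum.inter_restrict)
  also have "{..<j} \<inter> {i. i \<le> n0} = {0..n0}" using n0j by auto
  finally have e2: "\<rho>^j = (\<Sum>i<j. of_int (a i) * \<rho>^i)" using e1 by simp
  have j1: "j \<ge> 1" using n0j by simp
  define v where "v = vec j (\<lambda>i. \<rho>^i)"
  have v: "v \<in> carrier_vec j" "v \<noteq> 0\<^sub>v j"
  proof -
    show "v \<in> carrier_vec j" unfolding v_def by simp
    have "v $ 0 = 1" using j1 unfolding v_def by simp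
    thus "v \<noteq> 0\<^sub>v j" using j1 by auto
  qed
  have rT: "\<rho> \<in> Tset j v" unfolding v_def by (rule Tset_companion[OF j1 e2])
  have lT: "lam \<in> Tset j v" unfolding lam
    by (rule closed_sum) (use Tset_zero[OF v(1)] Tset_one[OF v(1)] Tset_plus[OF _ _ v(1)] Tset_times[OF _ _ v(1)] rT z0 in auto)
  have ar: "algebraic_int \<rho>" by (rule Tset_alg_int[OF rT v])
  have al: "algebraic_int lam" by (rule Tset_alg_int[OF lT v])
  have rr: "\<rho> \<in> rat_adjoin \<rho>" unfolding rat_adjoin_def by auto
  have lr: "lam \<in> rat_adjoin \<rho>" unfolding rat_adjoin_def
  proof
    fix K assume "K \<in> {K. subfield_real K \<and> \<rho> \<in> K}"
    hence K: "subfield_real K" "\<rho> \<in> K" by auto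
    show "lam \<in> K" unfolding lam
      by (rule closed_sum) (use K z0 in \<open>auto simp: subfield_real_def\<close>)
  qed
  show ?thesis using ar al rr lr by auto
qed

end
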